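(* Let $(X,\phi)$ be a ranked convex geometry and let $\Sigma$ be its critical base. For $j\in X$ let $\mathrm{pred}(j)=\{a\in X: \exists A\to j\in\Sigma,\ a\in A\}$. Let $j\in X$, $M\in j^{\nearrow}$ and $a\in X\setminus M$. Then $a\in\mathrm{pred}(j)$ if and only if $M\cup\{a,j\}$ is closed.
   Context: $X$ is finite. A closure operator $\phi$ on $X$ is extensive, monotone and idempotent; $(X,\phi)$ is standard if $\phi(\emptyset)=\emptyset$ and $\phi(\{x\})\setminus\{x\}$ is closed for all $x$. A unit implicational base $\Sigma$ (implications $A\to b$, $A\subseteq X$, $b\in X$) is an implicational base of $(X,\phi)$ if its closed sets (sets $S$ with $A\not\subseteq S$ or $b\in S$ for each $A\to b\in\Sigma$) are exactly the closed sets of $\phi$. $\Sigma$ is ranked if there is $\rho:X\to\mathbb{N}$ with $\rho(a)=\rho(b)+1$ whenever $A\to b\in\Sigma$ and $a\in A$. A ranked convex geometry is a standard closure space admitting a ranked implicational base (such bases are acyclic). $A$ is a minimal generator of $b$ if $b\in\phi(A)$ and $b\notin\phi(A\setminus\{x\})$ for all $x\in A$. The critical base is the unique irredundant implicational base (no implication can be removed without changing the closed sets) all of whose implications $A\to b$ have $A$ a minimal generator of $b$; it exists for acyclic convex geometries and is ranked for ranked ones. For $j\in X$, $j^{\nearrow}$ is the set of inclusion-maximal closed sets not containing $j$. *)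

theory Defs
  imports Main
begin

definition closure_operator :: "'a set \<Rightarrow> ('a set \<Rightarrow> 'a set) \<Rightarrow> bool" where
  "closure_operator X phi \<longleftrightarrow> finite X \<and>
     (\<forall>A. A \<subseteq> X \<longrightarrow> A \<subseteq> phi A \<and> phi A \<subseteq> X) \<and>
     (\<forall>A B. A \<subseteq> B \<and> B \<subseteq> X \<longrightarrow> phi A \<subseteq> phi B) \<and>
     (\<forall>A. A \<subseteq> X \<longrightarrow> phi (phi A) = phi A)"

definition is_closed :: "'a set \<Rightarrow> ('a set \<Rightarrow> 'a set) \<Rightarrow> 'a set \<Rightarrow> bool" where
  "is_closed X phi S \<longleftrightarrow> S \<subseteq> X \<and> phi S = S"

definition standard :: "'a set \<Rightarrow> ('a set \<Rightarrow> 'a set) \<Rightarrow> bool" where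
  "standard X phi \<longleftrightarrow> phi {} = {} \<and> (\<forall>x\<in>X. is_closed X phi (phi {x} - {x}))"

definition unit_base :: "'a set \<Rightarrow> ('a set \<times> 'a) set \<Rightarrow> bool" where
  "unit_base X \<Sigma> \<longleftrightarrow> (\<forall>(A, b)\<in>\<Sigma>. A \<subseteq> X \<and> b \<in> X)"

definition sigma_closed :: "'a set \<Rightarrow> ('a set \<times> 'a) set \<Rightarrow> 'a set \<Rightarrow> bool" where
  "sigma_closed X \<Sigma> S \<longleftrightarrow> S \<subseteq> X \<and> (\<forall>(A, b)\<in>\<Sigma>. \<not> A \<subseteq> S \<or> b \<in> S)"

definition implicational_base :: "'a set \<Rightarrow> ('a set \<Rightarrow> 'a set) \<Rightarrow> ('a set \<times> 'a) set \<Rightarrow> bool" where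
  "implicational_base X phi \<Sigma> \<longleftrightarrow> unit_base X \<Sigma> \<and>
     (\<forall>S. sigma_closed X \<Sigma> S \<longleftrightarrow> is_closed X phi S)"

definition ranked_base :: "('a set \<times> 'a) set \<Rightarrow> bool" where
  "ranked_base \<Sigma> \<longleftrightarrow> (\<exists>\<rho> :: 'a \<Rightarrow> nat. \<forall>(A, b)\<in>\<Sigma>. \<forall>a\<in>A. \<rho> a = \<rho> b + 1)"

definition ranked_convex_geometry :: "'a set \<Rightarrow> ('a set \<Rightarrow> 'a set) \<Rightarrow> bool" where
  "ranked_convex_geometry X phi \<longleftrightarrow> closure_operator X phi \<and> standard X phi \<and>
     (\<exists>\<Sigma>. implicational_base X phi \<Sigma> \<and> ranked_base \<Sigma>)"

definition minimal_generator :: "('a set \<Rightarrow> 'a set) \<Rightarrow> 'a set \<Rightarrow> 'a \<Rightarrow> bool" where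
  "minimal_generator phi A b \<longleftrightarrow> b \<in> phi A \<and> (\<forall>x\<in>A. b \<notin> phi (A - {x}))"

definition irredundant :: "'a set \<Rightarrow> ('a set \<times> 'a) set \<Rightarrow> bool" where
  "irredundant X \<Sigma> \<longleftrightarrow> (\<forall>i\<in>\<Sigma>. sigma_closed X (\<Sigma> - {i}) \<noteq> sigma_closed X \<Sigma>)"

definition critical_base :: "'a set \<Rightarrow> ('a set \<Rightarrow> 'a set) \<Rightarrow> ('a set \<times> 'a) set \<Rightarrow> bool" where
  "critical_base X phi \<Sigma> \<longleftrightarrow> implicational_base X phi \<Sigma> \<and> irredundant X \<Sigma> \<and>
     (\<forall>(A, b)\<in>\<Sigma>. minimal_generator phi A b)"

definition pred :: "('a set \<times> 'a) set \<Rightarrow> 'a \<Rightarrow> 'a set" where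
  "pred \<Sigma> j = {a. \<exists>A. (A, j) \<in> \<Sigma> \<and> a \<in> A}"

(* j^nearrow: inclusion-maximal closed sets not containing j *)
definition up_set :: "'a set \<Rightarrow> ('a set \<Rightarrow> 'a set) \<Rightarrow> 'a \<Rightarrow> 'a set set" where
  "up_set X phi j = {M. is_closed X phi M \<and> j \<notin> M \<and>
     (\<forall>M'. is_closed X phi M' \<and> j \<notin> M' \<and> M \<subseteq> M' \<longrightarrow> M' = M)}"

end

theory Submission
  imports Defs
begin

locale rcg =
  fixes X :: "'a set" and phi :: "'a set \<Rightarrow> 'a set" and S0 :: "('a set \<times> 'a) set"
    and rho :: "'a \<Rightarrow> nat"
  assumes co: "closure_operator X phi" and emp: "phi {} = {}"
    and base: "implicational_base X phi S0"
    and rk: "\<forall>(B, b)\<in>S0. \<forall>x\<in>B. rho x = rho b + 1"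
begin

lemma co_parts:
  "finite X"
  "\<And>A. A \<subseteq> X \<Longrightarrow> A \<subseteq> phi A \<and> phi A \<subseteq> X"
  "\<And>A B. A \<subseteq> B \<Longrightarrow> B \<subseteq> X \<Longrightarrow> phi A \<subseteq> phi B"
  "\<And>A. A \<subseteq> X \<Longrightarrow> phi (phi A) = phi A"
  using co unfolding closure_operator_def by simp_all

lemma extensive: "A \<subseteq> X \<Longrightarrow> A \<subseteq> phi A"
  using co_parts(2) by simp

lemma phi_sub: "A \<subseteq> X \<Longrightarrow> phi A \<subseteq> X"
  using co_parts(2) by simp

lemma monot: "A \<subseteq> B \<Longrightarrow> B \<subseteq> X \<Longrightarrow> phi A \<subseteq> phi B"
  by (rule co_parts(3))

lemma phi_closed: "A \<subseteq> X \<Longrightarrow> is_closed X phi (phi A)"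
  unfolding is_closed_def using phi_sub co_parts(4) by simp

lemma least: "A \<subseteq> T \<Longrightarrow> is_closed X phi T \<Longrightarrow> phi A \<subseteq> T"
proof -
  assume a: "A \<subseteq> T" "is_closed X phi T"
  then have "T \<subseteq> X" "phi T = T" unfolding is_closed_def by simp_all
  then show ?thesis using monot[OF a(1)] by simp
qed

lemma cl_iff: "is_closed X phi T \<longleftrightarrow> sigma_closed X S0 T"
  using base by (simp add: implicational_base_def)

lemma S0_closedD: "is_closed X phi T \<Longrightarrow> (B, b) \<in> S0 \<Longrightarrow> B \<subseteq> T \<Longrightarrow> b \<in> T"
  unfolding cl_iff sigma_closed_def by blast

lemma S0_closedI: "T \<subseteq> X \<Longrightarrow> (\<And>B b. (B, b) \<in> S0 \<Longrightarrow> B \<subseteq> T \<Longrightarrow> b \<in> T) \<Longrightarrow> is_closed X phi T"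
  unfolding cl_iff sigma_closed_def by blast

lemma S0_in: "(B, b) \<in> S0 \<Longrightarrow> B \<subseteq> X \<and> b \<in> X"
  using base unfolding implicational_base_def unit_base_def by blast

lemma rkD: "(B, b) \<in> S0 \<Longrightarrow> x \<in> B \<Longrightarrow> rho x = rho b + 1"
  using rk by blast

lemma level:
  assumes YX: "Y \<subseteq> X"
  shows "phi Y \<inter> {x. r \<le> rho x} \<subseteq> phi (Y \<inter> {x. r < rho x}) \<union> (Y \<inter> {x. rho x = r})"
proof -
  let ?Y = "Y \<inter> {x. r < rho x}"
  let ?Z = "phi ?Y \<union> (Y \<inter> {x. rho x = r}) \<union> {x\<in>X. rho x < r}"
  have YX': "?Y \<subseteq> X" using YX by auto
  have c: "is_closed X phi ?Z"
  proof (rule S0_closedI)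
    show "?Z \<subseteq> X" using phi_sub[OF YX'] YX by auto
    fix B b assume Bb: "(B, b) \<in> S0" "B \<subseteq> ?Z"
    show "b \<in> ?Z"
    proof (cases "rho b < r")
      case True then show ?thesis using S0_in[OF Bb(1)] by auto
    next
      case False
      have "B \<subseteq> phi ?Y"
      proof
        fix x assume x: "x \<in> B"
        then have "rho x = rho b + 1" using rkD Bb(1) by auto
        then show "x \<in> phi ?Y" using Bb(2) x False by auto
      qed
      then have "b \<in> phi ?Y" using S0_closedD[OF phi_closed[OF YX'] Bb(1)] by blast
      then show ?thesis by blast
    qed
  qed
  have "Y \<subseteq> ?Z"
  proof
    fix y assume y: "y \<in> Y"
    show "y \<in> ?Z"
    proof (cases "r < rho y")
      case True then have "y \<in> ?Y" using y by auto
      then show ?thesis using extensive[OF YX'] by blast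
    next
      case False then show ?thesis using y YX by auto
    qed
  qed
  then have "phi Y \<subseteq> ?Z" by (rule least[OF _ c])
  then show ?thesis by auto
qed

lemma upper:
  assumes M: "is_closed X phi M" and y: "y \<in> X"
  shows "phi (insert y M) \<subseteq> insert y M \<union> {x\<in>X. rho x < rho y}"
proof -
  let ?Z = "insert y M \<union> {x\<in>X. rho x < rho y}"
  have c: "is_closed X phi ?Z"
  proof (rule S0_closedI)
    show "?Z \<subseteq> X" using M y unfolding is_closed_def by auto
    fix B b assume Bb: "(B, b) \<in> S0" "B \<subseteq> ?Z"
    show "b \<in> ?Z"
    proof (cases "rho b < rho y")
      case True then show ?thesis using S0_in[OF Bb(1)] by auto
    next
      case False
      have "B \<subseteq> M"
      proof
        fix x assume x: "x \<in> B"
        then have "rho x = rho b + 1" using rkD Bb(1) by auto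
        then show "x \<in> M" using Bb(2) x False by auto
      qed
      then have "b \<in> M" using S0_closedD[OF M Bb(1)] by blast
      then show ?thesis by blast
    qed
  qed
  show ?thesis by (rule least[OF _ c]) auto
qed

lemma deriv:
  assumes YX: "Y \<subseteq> X" and x: "x \<in> phi Y" "x \<notin> Y"
  shows "\<exists>B. (B, x) \<in> S0 \<and> B \<subseteq> phi Y"
proof (rule ccontr)
  assume n: "\<not> ?thesis"
  have c: "is_closed X phi (phi Y - {x})"
  proof (rule S0_closedI)
    show "phi Y - {x} \<subseteq> X" using phi_sub[OF YX] by auto
    fix B b assume Bb: "(B, b) \<in> S0" "B \<subseteq> phi Y - {x}"
    then have "b \<in> phi Y" using S0_closedD[OF phi_closed[OF YX] Bb(1)] by blast
    moreover have "b \<noteq> x" using n Bb by blast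
    ultimately show "b \<in> phi Y - {x}" by blast
  qed
  have "Y \<subseteq> phi Y - {x}" using extensive[OF YX] x(2) by blast
  then have "phi Y \<subseteq> phi Y - {x}" by (rule least[OF _ c])
  then show False using x(1) by blast
qed

lemma dec:
  assumes crit: "critical_base X phi \<Sigma>" and Cc: "(C, c) \<in> \<Sigma>" and x: "x \<in> C"
  shows "rho c < rho x"
proof -
  have mg: "minimal_generator phi C c" using crit Cc unfolding critical_base_def by blast
  have ib: "implicational_base X phi \<Sigma>" using crit unfolding critical_base_def by blast
  have CX: "C \<subseteq> X" and cX: "c \<in> X"
    using ib Cc unfolding implicational_base_def unit_base_def by blast+
  have irr: "irredundant X \<Sigma>" using crit unfolding critical_base_def by blast
  have cC: "c \<notin> C"
  proof
    assume cin: "c \<in> C"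
    have "C = {c}"
    proof (rule ccontr)
      assume "C \<noteq> {c}"
      then obtain y where y: "y \<in> C" "y \<noteq> c" using cin by blast
      have "C - {y} \<subseteq> X" using CX by blast
      then have "c \<in> phi (C - {y})" using extensive cin y by blast
      then show False using mg y unfolding minimal_generator_def by blast
    qed
    have "sigma_closed X (\<Sigma> - {(C, c)}) = sigma_closed X \<Sigma>"
    proof
      fix S show "sigma_closed X (\<Sigma> - {(C, c)}) S = sigma_closed X \<Sigma> S"
        unfolding sigma_closed_def using \<open>C = {c}\<close> by auto
    qed
    then show False using irr Cc unfolding irredundant_def by blast
  qed
  show ?thesis
  proof (rule ccontr)
    assume "\<not> rho c < rho x"
    have "c \<in> phi C \<inter> {y. rho c \<le> rho y}" using mg unfolding minimal_generator_def by auto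
    then have "c \<in> phi (C \<inter> {y. rho c < rho y})" using level[OF CX, of "rho c"] cC by blast
    moreover have "phi (C \<inter> {y. rho c < rho y}) \<subseteq> phi (C - {x})"
      using \<open>\<not> rho c < rho x\<close> CX by (intro monot) auto
    ultimately show False using mg x unfolding minimal_generator_def by blast
  qed
qed

lemma crit_rank:
  assumes crit: "critical_base X phi \<Sigma>" and Aj: "(A, j) \<in> \<Sigma>" and a: "a \<in> A"
  shows "rho a = rho j + 1"
proof (rule ccontr)
  assume ne: "rho a \<noteq> rho j + 1"
  have lt: "rho j < rho a" using dec[OF crit Aj a] .
  then have ge: "rho j + 2 \<le> rho a" using ne by auto
  have mg: "minimal_generator phi A j" using crit Aj unfolding critical_base_def by blast
  have ib: "implicational_base X phi \<Sigma>" using crit unfolding critical_base_def by blast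
  have AX: "A \<subseteq> X" and jX: "j \<in> X"
    using ib Aj unfolding implicational_base_def unit_base_def by blast+
  have irr: "irredundant X \<Sigma>" using crit unfolding critical_base_def by blast
  have clS: "is_closed X phi T \<longleftrightarrow> sigma_closed X \<Sigma> T" for T
    using ib unfolding implicational_base_def by blast
  have "sigma_closed X (\<Sigma> - {(A, j)}) \<noteq> sigma_closed X \<Sigma>"
    using irr Aj unfolding irredundant_def by blast
  then obtain S where S: "sigma_closed X (\<Sigma> - {(A, j)}) S \<noteq> sigma_closed X \<Sigma> S" by blast
  have S': "sigma_closed X (\<Sigma> - {(A, j)}) S" and S'': "\<not> sigma_closed X \<Sigma> S"
    using S unfolding sigma_closed_def by blast+
  have SX: "S \<subseteq> X" using S' unfolding sigma_closed_def by blast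
  have Scl: "\<And>C c. (C, c) \<in> \<Sigma> \<Longrightarrow> (C, c) \<noteq> (A, j) \<Longrightarrow> C \<subseteq> S \<Longrightarrow> c \<in> S"
    using S' unfolding sigma_closed_def by blast
  have AS: "A \<subseteq> S" and jS: "j \<notin> S"
    using S'' SX Scl unfolding sigma_closed_def by blast+
  let ?V = "S \<union> {x\<in>X. rho x \<le> rho j}"
  have Vc: "is_closed X phi ?V"
    unfolding clS sigma_closed_def
  proof (intro conjI ballI)
    show "?V \<subseteq> X" using SX by auto
    fix p assume p: "p \<in> \<Sigma>"
    obtain C c where pc: "p = (C, c)" by (cases p)
    have cX: "c \<in> X" using ib p pc unfolding implicational_base_def unit_base_def by blast
    have "C \<subseteq> ?V \<Longrightarrow> c \<in> ?V"
    proof (cases "rho c \<le> rho j")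
      case True then show ?thesis using cX by auto
    next
      case False
      assume CV: "C \<subseteq> ?V"
      have "C \<subseteq> S"
      proof
        fix x assume "x \<in> C"
        then have "rho c < rho x" using dec[OF crit] p pc by blast
        then show "x \<in> S" using CV \<open>x \<in> C\<close> False by auto
      qed
      moreover have "(C, c) \<noteq> (A, j)" using False by auto
      ultimately show ?thesis using Scl p pc by blast
    qed
    then show "case p of (C, c) \<Rightarrow> \<not> C \<subseteq> ?V \<or> c \<in> ?V" using pc by auto
  qed
  have "phi A \<subseteq> ?V" using AS by (intro least[OF _ Vc]) auto
  have jA: "j \<notin> A" using dec[OF crit Aj] by auto
  have "j \<in> phi A" using mg unfolding minimal_generator_def by blast
  then obtain B where B: "(B, j) \<in> S0" "B \<subseteq> phi A" using deriv[OF AX _ jA] by blast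
  have BX: "B \<subseteq> X" using S0_in[OF B(1)] by blast
  have BS: "B \<subseteq> S"
  proof
    fix x assume x: "x \<in> B"
    then have "rho x = rho j + 1" using rkD B(1) by blast
    then show "x \<in> S" using x B(2) \<open>phi A \<subseteq> ?V\<close> by auto
  qed
  have aB: "a \<notin> phi B"
  proof
    assume "a \<in> phi B"
    then have "a \<in> phi B \<inter> {x. rho j + 2 \<le> rho x}" using ge by auto
    then have "a \<in> phi (B \<inter> {x. rho j + 2 < rho x}) \<union> (B \<inter> {x. rho x = rho j + 2})"
      using level[OF BX] by blast
    moreover have e1: "B \<inter> {x. rho j + 2 < rho x} = {}" and e2: "B \<inter> {x. rho x = rho j + 2} = {}"
      using rkD[OF B(1)] by fastforce+
    moreover have "a \<notin> phi (B \<inter> {x. rho j + 2 < rho x})" unfolding e1 emp by simp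
    moreover have "a \<notin> B \<inter> {x. rho x = rho j + 2}" unfolding e2 by simp
    ultimately show False by (simp only: Un_iff) simp
  qed
  have phiBc: "is_closed X phi (phi B)" using phi_closed[OF BX] .
  have jB: "j \<in> phi B" using S0_closedD[OF phiBc B(1) extensive[OF BX]] .
  have Wc: "is_closed X phi (S \<inter> phi B)"
    unfolding clS sigma_closed_def
  proof (intro conjI ballI)
    show "S \<inter> phi B \<subseteq> X" using SX by auto
    fix p assume p: "p \<in> \<Sigma>"
    obtain C c where pc: "p = (C, c)" by (cases p)
    have "C \<subseteq> S \<inter> phi B \<Longrightarrow> c \<in> S \<inter> phi B"
    proof -
      assume CW: "C \<subseteq> S \<inter> phi B"
      have "(C, c) \<noteq> (A, j)" using CW aB a by blast
      then have "c \<in> S" using Scl p pc CW by blast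
      moreover have "c \<in> phi B" using phiBc p pc CW unfolding clS sigma_closed_def by blast
      ultimately show ?thesis by blast
    qed
    then show "case p of (C, c) \<Rightarrow> \<not> C \<subseteq> S \<inter> phi B \<or> c \<in> S \<inter> phi B" using pc by auto
  qed
  have "phi B \<subseteq> S \<inter> phi B" using BS extensive[OF BX] by (intro least[OF _ Wc]) auto
  then show False using jB jS by blast
qed

end

theorem lemma4:
  fixes X :: "'a set" and phi :: "'a set \<Rightarrow> 'a set" and \<Sigma> :: "('a set \<times> 'a) set"
  assumes "ranked_convex_geometry X phi"
    and "critical_base X phi \<Sigma>"
    and "j \<in> X"
    and "M \<in> up_set X phi j"
    and "a \<in> X - M"
    and "a \<noteq> j"
  shows "a \<in> pred \<Sigma> j \<longleftrightarrow> is_closed X phi (M \<union> {a, j})"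
proof -
  obtain S0 where S0: "implicational_base X phi S0" "ranked_base S0"
    using assms(1) unfolding ranked_convex_geometry_def by blast
  obtain rho :: "'a \<Rightarrow> nat" where rk: "\<forall>(B, b)\<in>S0. \<forall>x\<in>B. rho x = rho b + 1"
    using S0(2) unfolding ranked_base_def by blast
  interpret r: rcg X phi S0 rho
    using assms(1) S0(1) rk unfolding rcg_def ranked_convex_geometry_def standard_def by blast
  have crit: "critical_base X phi \<Sigma>" by fact
  have ib: "implicational_base X phi \<Sigma>" using crit unfolding critical_base_def by blast
  have clS: "is_closed X phi T \<longleftrightarrow> sigma_closed X \<Sigma> T" for T
    using ib unfolding implicational_base_def by blast
  have Mc: "is_closed X phi M" and jM: "j \<notin> M"
    and mx: "\<And>M'. is_closed X phi M' \<Longrightarrow> j \<notin> M' \<Longrightarrow> M \<subseteq> M' \<Longrightarrow> M' = M"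
    using assms(4) unfolding up_set_def by blast+
  have MX: "M \<subseteq> X" using Mc unfolding is_closed_def by blast
  have aX: "a \<in> X" and aM: "a \<notin> M" using assms(5) by auto
  show ?thesis
  proof
    assume "a \<in> pred \<Sigma> j"
    then obtain A where A: "(A, j) \<in> \<Sigma>" "a \<in> A" unfolding pred_def by blast
    have ra: "rho a = rho j + 1" using r.crit_rank[OF crit A] .
    let ?N = "phi (insert a M)"
    have iX: "insert a M \<subseteq> X" using MX aX by blast
    have Nc: "is_closed X phi ?N" using r.phi_closed[OF iX] .
    have iN: "insert a M \<subseteq> ?N" using r.extensive[OF iX] .
    have jN: "j \<in> ?N"
    proof (rule ccontr)
      assume "j \<notin> ?N"
      then have "?N = M" using mx[OF Nc] iN by blast
      then show False using iN aM by blast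
    qed
    have "?N \<subseteq> M \<union> {a, j}"
    proof
      fix x assume xN: "x \<in> ?N"
      show "x \<in> M \<union> {a, j}"
      proof (rule ccontr)
        assume xn: "x \<notin> M \<union> {a, j}"
        have "x \<in> X" "rho x < rho a" using r.upper[OF Mc aX] xN xn by auto
        let ?N' = "phi (insert x M)"
        have iX': "insert x M \<subseteq> X" using MX \<open>x \<in> X\<close> by blast
        have N'c: "is_closed X phi ?N'" using r.phi_closed[OF iX'] .
        have iN': "insert x M \<subseteq> ?N'" using r.extensive[OF iX'] .
        have "j \<notin> ?N'" using r.upper[OF Mc \<open>x \<in> X\<close>] jM xn ra \<open>rho x < rho a\<close> by auto
        then have "?N' = M" using mx[OF N'c] iN' by blast
        then show False using iN' xn by blast
      qed
    qed
    then have "?N = M \<union> {a, j}" using iN jN by blast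
    then show "is_closed X phi (M \<union> {a, j})" using Nc by simp
  next
    assume cl: "is_closed X phi (M \<union> {a, j})"
    have "\<not> is_closed X phi (insert a M)"
    proof
      assume "is_closed X phi (insert a M)"
      then have "insert a M = M" using mx assms(6) jM by blast
      then show False using aM by blast
    qed
    then have "\<not> sigma_closed X \<Sigma> (insert a M)" using clS by blast
    moreover have "insert a M \<subseteq> X" using MX aX by blast
    ultimately obtain B b where Bb: "(B, b) \<in> \<Sigma>" "B \<subseteq> insert a M" "b \<notin> insert a M"
      unfolding sigma_closed_def by blast
    have "\<not> B \<subseteq> M" using Mc Bb unfolding clS sigma_closed_def by blast
    then have aB: "a \<in> B" using Bb(2) by blast
    have "b \<in> M \<union> {a, j}" using cl Bb unfolding clS sigma_closed_def by blast
    then have "b = j" using Bb(3) by blast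
    then show "a \<in> pred \<Sigma> j" using Bb(1) aB unfolding pred_def by blast
  qed
qed

end
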